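(* For all $n\ge2$ and all $x,y\in\mathbb{H}^n$, $$\mathrm{th}\frac{\rho_{\mathbb{H}^n}(x,y)}{2}\le b_{\mathbb{H}^n,2}(x,y)\le\sqrt2\,\mathrm{th}\frac{\rho_{\mathbb{H}^n}(x,y)}{2},$$ and the constants $1$ and $\sqrt2$ are the best possible.
   Context: $\mathbb{H}^n=\{(x_1,\dots,x_n)\in\mathbb{R}^n:x_n>0\}$ is the upper half-space, and $d_{\mathbb{H}^n}(x)=x_n$ is the distance to its boundary. The hyperbolic metric of $\mathbb{H}^n$ is given by $\mathrm{ch}\,\rho_{\mathbb{H}^n}(x,y)=1+\frac{|x-y|^2}{2d_{\mathbb{H}^n}(x)d_{\mathbb{H}^n}(y)}$. For a domain $G\subsetneq\mathbb{R}^n$ and $p\ge1$, the Barrlund metric is $b_{G,p}(x,y)=\sup_{z\in\partial G}\frac{|x-y|}{(|x-z|^p+|z-y|^p)^{1/p}}$. *)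

theory Defs
  imports "HOL-Analysis.Analysis"
begin

text \<open>Upper half-space of a Euclidean space with respect to the coordinate direction e
  (a basis vector playing the role of the last coordinate axis x_n).\<close>
definition upper_half :: "'a::euclidean_space \<Rightarrow> 'a set" where
  "upper_half e = {x. x \<bullet> e > 0}"

definition dH :: "'a::euclidean_space \<Rightarrow> 'a \<Rightarrow> real" where
  "dH e x = x \<bullet> e"

definition rhoH :: "'a::euclidean_space \<Rightarrow> 'a \<Rightarrow> 'a \<Rightarrow> real" where
  "rhoH e x y = arcosh (1 + (dist x y)\<^sup>2 / (2 * dH e x * dH e y))"

definition barrlund :: "'a::euclidean_space set \<Rightarrow> real \<Rightarrow> 'a \<Rightarrow> 'a \<Rightarrow> real" where
  "barrlund G p x y =
     (SUP z\<in>frontier G. dist x y / ((dist x z) powr p + (dist z y) powr p) powr (1 / p))"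

end

theory Submission
  imports Defs
begin

lemma tanh_half_arcosh:
  fixes t :: real
  assumes "t \<ge> 1"
  shows "tanh (arcosh t / 2) = sqrt ((t-1)/(t+1))"
proof -
  define v where "v = arcosh t / 2"
  have v0: "v \<ge> 0" using assms by (simp add: v_def)
  have "cosh (2 * v) = t" using assms by (simp add: v_def)
  hence t: "t = cosh v ^2 + sinh v^2" by (simp add: cosh_double)
  have c: "cosh v^2 = sinh v^2 + 1" by (rule cosh_square_eq)
  have cp: "cosh v > 0" by simp
  have t1: "t - 1 = 2 * sinh v ^ 2" and t2: "t + 1 = 2 * cosh v ^ 2" using t c by auto
  have "(t-1)/(t+1) = (tanh v)^2"
    unfolding t1 t2 by (simp add: tanh_def power_divide)
  hence "sqrt ((t-1)/(t+1)) = tanh v" using v0 by simp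
  thus ?thesis by (simp add: v_def)
qed

lemma dist_sq_ge:
  fixes x y e :: "'a::euclidean_space"
  assumes "e \<in> Basis"
  shows "((x - y) \<bullet> e)^2 \<le> (dist x y)^2"
proof -
  have "\<bar>(x - y) \<bullet> e\<bar> \<le> dist x y" using assms by (simp add: dist_norm Basis_le_norm)
  hence "\<bar>(x - y) \<bullet> e\<bar>^2 \<le> (dist x y)^2" by (intro power_mono) auto
  thus ?thesis by simp
qed

lemma key_tanh:
  fixes x y e :: "'a::euclidean_space"
  assumes "x \<bullet> e > 0" "y \<bullet> e > 0"
  shows "tanh (rhoH e x y / 2) = sqrt ((dist x y)^2 / ((dist x y)^2 + 4*(x\<bullet>e)*(y\<bullet>e)))"
proof -
  define t where "t = 1 + (dist x y)\<^sup>2 / (2 * (x\<bullet>e) * (y\<bullet>e))"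
  have t1: "t \<ge> 1" using assms by (simp add: t_def)
  have "rhoH e x y = arcosh t" by (simp add: rhoH_def dH_def t_def)
  hence "tanh (rhoH e x y / 2) = sqrt ((t-1)/(t+1))" using tanh_half_arcosh[OF t1] by simp
  also have "(t-1)/(t+1) = (dist x y)^2 / ((dist x y)^2 + 4*(x\<bullet>e)*(y\<bullet>e))"
    using assms unfolding t_def by (simp add: field_simps)
  finally show ?thesis .
qed

lemma key_barr:
  fixes x y e :: "'a::euclidean_space"
  assumes e: "e \<in> Basis" and "x \<bullet> e > 0" "y \<bullet> e > 0"
  shows "barrlund (upper_half e) 2 x y
     = sqrt ((dist x y)^2 / ((dist x y)^2/2 + ((x\<bullet>e) + (y\<bullet>e))^2/2))"
proof -
  define a where "a = x \<bullet> e"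
  define b where "b = y \<bullet> e"
  define D where "D = (dist x y)^2"
  define S0 where "S0 = D/2 + (a+b)^2/2"
  have a0: "a > 0" and b0: "b > 0" using assms by (auto simp: a_def b_def)
  have S0: "S0 > 0" using a0 b0 unfolding S0_def D_def by (intro add_nonneg_pos) auto
  have ee: "e \<bullet> e = 1" using e by simp
  have ne: "e \<noteq> 0" using e by auto
  have fr: "frontier (upper_half e) = {z. z \<bullet> e = 0}"
  proof -
    have "upper_half e = {z. e \<bullet> z > 0}" by (simp add: upper_half_def inner_commute)
    thus ?thesis using frontier_halfspace_gt[of e 0] ne by (simp add: inner_commute)
  qed
  define m where "m = (1/2) *\<^sub>R (x + y)"
  have ident: "(dist x z)^2 + (dist z y)^2 = 2 * (norm (z - m))^2 + D/2" for z
    unfolding m_def D_def dist_norm power2_norm_eq_inner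
    by (simp add: inner_diff_left inner_diff_right inner_add_left inner_add_right inner_commute algebra_simps) (simp add: field_simps)
  have lower: "(dist x z)^2 + (dist z y)^2 \<ge> S0" if "z \<bullet> e = 0" for z
  proof -
    have h1: "((z - m) \<bullet> e)^2 \<le> (norm (z - m))^2" using dist_sq_ge[OF e, of z m] by (simp add: dist_norm)
    have h2: "(z - m) \<bullet> e = - (a+b)/2"
      using that by (simp add: m_def a_def b_def inner_diff_left inner_add_left) (simp add: field_simps)
    have h3: "(- (a+b)/2)^2 = (a+b)^2/4" by (simp add: power2_eq_square field_simps)
    have "(a+b)^2/4 \<le> (norm (z - m))^2" using h1 unfolding h2 h3 .
    thus ?thesis using ident[of z] by (simp add: S0_def)
  qed
  define z0 where "z0 = m - ((a+b)/2) *\<^sub>R e"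
  have z0e: "z0 \<bullet> e = 0"
    by (simp add: z0_def m_def a_def b_def inner_diff_left inner_add_left ee)
  have z0v: "(dist x z0)^2 + (dist z0 y)^2 = S0"
    using ident[of z0] e by (simp add: z0_def S0_def power_mult_distrib power_divide)
  define g where "g z = dist x y / ((dist x z) powr 2 + (dist z y) powr 2) powr (1 / 2)" for z
  have g: "g z = dist x y / sqrt ((dist x z)^2 + (dist z y)^2)" for z
    by (simp add: g_def powr_half_sqrt)
  have M: "dist x y / sqrt S0 = sqrt (D / S0)"
    by (simp add: D_def real_sqrt_divide)
  have "(SUP z\<in>frontier (upper_half e). g z) = dist x y / sqrt S0"
  proof (rule cSup_eq_maximum)
    show "dist x y / sqrt S0 \<in> g ` frontier (upper_half e)"
      using z0e z0v by (auto simp: fr g intro!: image_eqI[of _ _ z0])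
  next
    fix w assume "w \<in> g ` frontier (upper_half e)"
    then obtain z where z: "z \<bullet> e = 0" and w: "w = g z" by (auto simp: fr)
    have "sqrt S0 \<le> sqrt ((dist x z)^2 + (dist z y)^2)" using lower[OF z] by simp
    thus "w \<le> dist x y / sqrt S0" using S0 by (simp add: w g divide_left_mono)
  qed
  hence "barrlund (upper_half e) 2 x y = dist x y / sqrt S0"
    by (simp add: barrlund_def g_def)
  thus ?thesis using M by (simp add: S0_def D_def a_def b_def)
qed


lemma part1:
  fixes x y e :: "'a::euclidean_space"
  assumes e: "e \<in> Basis" and x: "x \<in> upper_half e" and y: "y \<in> upper_half e"
  shows "tanh (rhoH e x y / 2) \<le> barrlund (upper_half e) 2 x y \<and>
            barrlund (upper_half e) 2 x y \<le> sqrt 2 * tanh (rhoH e x y / 2)"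
proof -
  define a where "a = x \<bullet> e"
  define b where "b = y \<bullet> e"
  define D where "D = (dist x y)^2"
  have a0: "a > 0" and b0: "b > 0" using x y by (auto simp: a_def b_def upper_half_def)
  have T: "tanh (rhoH e x y / 2) = sqrt (D / (D + 4*a*b))"
    using key_tanh[of x e y] a0 b0 by (simp add: a_def b_def D_def)
  have B: "barrlund (upper_half e) 2 x y = sqrt (D / (D/2 + (a+b)^2/2))"
    using key_barr[OF e, of x y] a0 b0 by (simp add: a_def b_def D_def)
  have Dab: "(a - b)^2 \<le> D" using dist_sq_ge[OF e, of x y]
    by (simp add: D_def a_def b_def inner_diff_left)
  have D0: "D \<ge> 0" by (simp add: D_def)
  have p1: "0 < D/2 + (a+b)^2/2" using a0 b0 D0 by (intro add_nonneg_pos) auto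
  have p2: "0 < D + 4*a*b" using a0 b0 D0 by (intro add_nonneg_pos) auto
  have ab: "a * b > 0" using a0 b0 by simp
  have le1: "D/2 + (a+b)^2/2 \<le> D + 4*a*b"
  proof -
    have "(a+b)^2 = (a-b)^2 + 4*(a*b)" by (simp add: power2_eq_square algebra_simps)
    moreover have "4*a*b = 4*(a*b)" by simp
    ultimately show ?thesis using Dab ab by linarith
  qed
  have q1: "D / (D + 4*a*b) \<le> D / (D/2 + (a+b)^2/2)"
    using le1 D0 mult_pos_pos[OF p2 p1] by (rule divide_left_mono)
  have p3: "0 < D + (a+b)^2" using a0 b0 D0 by (intro add_nonneg_pos) auto
  have le2: "D + 4*a*b \<le> D + (a+b)^2" 
  proof -
    have "(a+b)^2 = (a-b)^2 + 4*(a*b)" by (simp add: power2_eq_square algebra_simps)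
    moreover have "4*a*b = 4*(a*b)" by simp
    moreover have "(a-b)^2 \<ge> 0" by simp
    ultimately show ?thesis by linarith
  qed
  from q1 have i1: "tanh (rhoH e x y / 2) \<le> barrlund (upper_half e) 2 x y" unfolding T B by simp
  have "D / (D/2 + (a+b)^2/2) = 2 * D / (D + (a+b)^2)" by (simp add: field_simps)
  also have "\<dots> \<le> 2 * D / (D + 4*a*b)"
    using le2 _ mult_pos_pos[OF p3 p2] by (rule divide_left_mono) (use D0 in simp)
  also have "\<dots> = 2 * (D / (D + 4*a*b))" by simp
  finally have "sqrt (D / (D/2 + (a+b)^2/2)) \<le> sqrt 2 * sqrt (D / (D + 4*a*b))"
    by (simp add: real_sqrt_mult[symmetric])
  thus ?thesis using i1 unfolding T B by simp
qed

theorem lemma3p7: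
  fixes e :: "'a::euclidean_space"
  assumes "e \<in> Basis" and "DIM('a) \<ge> 2"
  shows "(\<forall>x\<in>upper_half e. \<forall>y\<in>upper_half e.
            tanh (rhoH e x y / 2) \<le> barrlund (upper_half e) 2 x y \<and>
            barrlund (upper_half e) 2 x y \<le> sqrt 2 * tanh (rhoH e x y / 2))
       \<and> (\<forall>c>1. \<exists>x\<in>upper_half e. \<exists>y\<in>upper_half e.
            barrlund (upper_half e) 2 x y < c * tanh (rhoH e x y / 2))
       \<and> (\<forall>c<sqrt 2. \<exists>x\<in>upper_half e. \<exists>y\<in>upper_half e.
            c * tanh (rhoH e x y / 2) < barrlund (upper_half e) 2 x y)"
proof -
  have P2: "\<exists>x\<in>upper_half e. \<exists>y\<in>upper_half e.
            barrlund (upper_half e) 2 x y < c * tanh (rhoH e x y / 2)" if c: "c > 1" for c :: real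
  proof -
  define k where "k = c^2 - 1"
  have k0: "k > 0" using c by (simp add: k_def)
  define \<beta> where "\<beta> = 1 + 4 / k"
  have b1: "\<beta> > 1" using k0 by (simp add: \<beta>_def)
  have ee: "e \<bullet> e = 1" using assms(1) by simp
  have xin: "e \<in> upper_half e" using ee by (simp add: upper_half_def)
  have yin: "\<beta> *\<^sub>R e \<in> upper_half e" using ee b1 by (simp add: upper_half_def)
  have dxy: "(dist e (\<beta> *\<^sub>R e))^2 = (\<beta> - 1)^2"
  proof -
    have "e - \<beta> *\<^sub>R e = (1 - \<beta>) *\<^sub>R e" by (simp add: algebra_simps)
    hence "dist e (\<beta> *\<^sub>R e) = \<bar>1 - \<beta>\<bar>" using assms(1) by (simp add: dist_norm)
    thus ?thesis by (simp add: power2_eq_square algebra_simps)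
  qed
  define D where "D = (\<beta> - 1)^2"
  have D0: "D > 0" using b1 by (simp add: D_def)
  have T: "tanh (rhoH e e (\<beta> *\<^sub>R e) / 2) = sqrt (D / (D + 4*\<beta>))"
    using key_tanh[of e e "\<beta> *\<^sub>R e"] ee b1 dxy by (simp add: D_def)
  have B: "barrlund (upper_half e) 2 e (\<beta> *\<^sub>R e) = sqrt (D / (D/2 + (1+\<beta>)^2/2))"
    using key_barr[OF assms(1), of e "\<beta> *\<^sub>R e"] ee b1 dxy by (simp add: D_def)
  have c0: "c > 0" using c by simp
  have cT: "c * sqrt (D / (1+\<beta>)^2) = sqrt (c^2 * (D / (1+\<beta>)^2))"
    using c0 by (simp only: real_sqrt_mult real_sqrt_abs abs_of_pos)
  have e1: "D/2 + (1+\<beta>)^2/2 = 1 + \<beta>^2" by (simp add: D_def power2_eq_square field_simps)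
  have e2: "D + 4*\<beta> = (1+\<beta>)^2" by (simp add: D_def power2_eq_square algebra_simps)
  have ineq: "(1+\<beta>)^2 < c^2 * (1 + \<beta>^2)"
  proof -
    have cc: "c^2 = 1 + k" by (simp add: k_def)
    have F1: "k^2 * (1+\<beta>)^2 = (2*k+4)^2" using k0 by (simp add: \<beta>_def power2_eq_square field_simps)
    have F2: "k^2 * ((1 + k) * (1 + \<beta>^2)) = (1+k)*(2*k^2+8*k+16)"
    proof -
      have Bq: "k^2*(1+\<beta>^2) = 2*k^2+8*k+16"
        using k0 by (simp add: \<beta>_def power2_eq_square field_simps)
      have "k^2 * ((1 + k) * (1 + \<beta>^2)) = (1+k)*(k^2*(1+\<beta>^2))" by (simp add: algebra_simps)
      thus ?thesis unfolding Bq .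
    qed
    have F3: "(2*k+4)^2 < (1+k)*(2*k^2+8*k+16)" using k0
      by (simp add: power2_eq_square algebra_simps) (smt (verit) k0 mult_pos_pos zero_less_power)
    have "k^2 * (1+\<beta>)^2 < k^2 * ((1 + k) * (1 + \<beta>^2))" unfolding F1 F2 by (rule F3)
    hence "(1+\<beta>)^2 < (1 + k) * (1 + \<beta>^2)" using k0
      by (simp add: mult_less_cancel_left_pos)
    thus ?thesis by (simp add: cc)
  qed
  have "D / (1 + \<beta>^2) < c^2 * (D / (1+\<beta>)^2)"
  proof -
    have p: "0 < 1 + \<beta>^2" "0 < (1+\<beta>)^2" using b1 by (auto intro: add_pos_nonneg)
    have "D * (1+\<beta>)^2 < D * (c^2 * (1 + \<beta>^2))" using D0 ineq by simp
    thus ?thesis using p by (simp add: field_simps)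
  qed
  hence "barrlund (upper_half e) 2 e (\<beta> *\<^sub>R e) < c * tanh (rhoH e e (\<beta> *\<^sub>R e) / 2)"
    unfolding T B e1 e2 cT by (rule real_sqrt_less_mono)
  thus ?thesis using xin yin by blast
  qed
  have P3: "\<exists>x\<in>upper_half e. \<exists>y\<in>upper_half e.
            c * tanh (rhoH e x y / 2) < barrlund (upper_half e) 2 x y" if c: "c < sqrt 2" for c :: real
  proof -
  have "card (Basis :: 'a set) \<ge> 2" using assms(2) by simp
  have "Basis - {e} \<noteq> {}"
  proof
    assume "Basis - {e} = {}"
    hence "(Basis :: 'a set) \<subseteq> {e}" by blast
    hence "card (Basis :: 'a set) \<le> card {e}" by (intro card_mono) auto
    thus False using \<open>card (Basis :: 'a set) \<ge> 2\<close> by simp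
  qed
  then obtain u where u: "u \<in> Basis" "u \<noteq> e" by blast
  have ue: "u \<bullet> e = 0" using u assms(1) by (simp add: inner_not_same_Basis)
  have ee: "e \<bullet> e = 1" using assms(1) by simp
  have xin: "e \<in> upper_half e" using ee by (simp add: upper_half_def)
  have yin: "e + u \<in> upper_half e" using ee ue by (simp add: upper_half_def inner_add_left)
  have dxy: "(dist e (e + u))^2 = 1" using u by (simp add: dist_norm)
  have T: "tanh (rhoH e e (e + u) / 2) = sqrt (1/5)"
    using key_tanh[of e e "e + u"] ee ue dxy by (simp add: inner_add_left)
  have B: "barrlund (upper_half e) 2 e (e + u) = sqrt (2/5)"
    using key_barr[OF assms(1), of e "e + u"] ee ue dxy by (simp add: inner_add_left)
  have "c * sqrt (1/5) < sqrt (2/5)"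
  proof (cases "c \<le> 0")
    case True
    have "c * sqrt (1/5) \<le> 0" using True by (simp add: mult_nonpos_nonneg)
    moreover have "sqrt (2/5) > (0::real)" by simp
    ultimately show ?thesis by linarith
  next
    case False
    hence "c^2 < (sqrt 2)^2" using c by (intro power_strict_mono) auto
    hence "c^2 < 2" by simp
    hence "c^2 * (1/5) < 2/5" by simp
    hence "sqrt (c^2 * (1/5)) < sqrt (2/5)" by (rule real_sqrt_less_mono)
    moreover have "c * sqrt (1/5) = sqrt (c^2 * (1/5))" using False
      by (simp only: real_sqrt_mult real_sqrt_abs abs_of_pos not_le)
    ultimately show ?thesis by simp
  qed
  thus ?thesis using xin yin T B by metis
  qed
  show ?thesis using P2 P3 part1[OF assms(1)] by blast
qed

end
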